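(* Let $G$ be a finite group of order $n\geq 2$. The number of subsets $S\subseteq G$ such that $\varphi(S)=S$ for some automorphism $\varphi\in\mathrm{Aut}(G)\setminus\{1\}$ is at most $2^{3n/4+(\log_2 n)^2}$. *)

theory Defs
  imports "HOL-Algebra.Bij" "HOL-Algebra.Coset" Complex_Main
begin

end

theory Submission
  imports Defs "HOL-Algebra.Generated_Groups"
begin

context group begin

lemma subgroup_double:
  assumes fin: "finite (carrier G)" and H: "subgroup H G" and K: "subgroup K G" and HK: "H \<subset> K"
  shows "2 * card H \<le> card K"
proof -
  interpret K: group "G\<lparr>carrier := K\<rparr>" using subgroup_imp_group[OF K] .
  have "subgroup H (G\<lparr>carrier := K\<rparr>)" using subgroup_incl[OF H K] HK by auto
  from K.lagrange[OF this] have eq: "card (rcosets\<^bsub>G\<lparr>carrier := K\<rparr>\<^esub> H) * card H = card K"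
    by (simp add: order_def)
  have finK: "finite K" using fin K subgroup.subset finite_subset by blast
  have lt: "card H < card K" using HK finK psubset_card_mono by blast
  define c where "c = card (rcosets\<^bsub>G\<lparr>carrier := K\<rparr>\<^esub> H)"
  have eq': "c * card H = card K" using eq c_def by simp
  have "c \<noteq> 0" using eq' lt by (metis mult_zero_left not_less_zero)
  moreover have "c \<noteq> 1" using eq' lt by auto
  ultimately have "2 \<le> c" by linarith
  then have "2 * card H \<le> c * card H" by (rule mult_le_mono1)
  then show ?thesis using eq' by simp
qed

lemma hom_group_hom: "f \<in> hom G G \<Longrightarrow> group_hom G G f"
  unfolding group_hom_def group_hom_axioms_def using is_group by auto

lemma equalizer_subgroup:
  assumes f: "f \<in> hom G G" and g: "g \<in> hom G G"
  shows "subgroup {x \<in> carrier G. f x = g x} G"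
proof -
  interpret f: group_hom G G f using hom_group_hom[OF f] .
  interpret g: group_hom G G g using hom_group_hom[OF g] .
  show ?thesis
  proof (rule subgroupI)
    show "{x \<in> carrier G. f x = g x} \<noteq> {}" using f.hom_one g.hom_one by auto
  qed (auto simp: hom_mult[OF f] hom_mult[OF g])
qed

lemma fixed_subgroup:
  assumes f: "f \<in> hom G G"
  shows "subgroup {x \<in> carrier G. f x = x} G"
proof -
  interpret f: group_hom G G f using hom_group_hom[OF f] .
  show ?thesis
  proof (rule subgroupI)
    show "{x \<in> carrier G. f x = x} \<noteq> {}" using f.hom_one by auto
  qed (auto simp: hom_mult[OF f])
qed

lemma gen_exists:
  assumes fin: "finite (carrier G)"
  shows "subgroup H G \<Longrightarrow> \<exists>T. T \<subseteq> carrier G \<and> finite T \<and> 2 ^ card T * card H \<le> order G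
            \<and> generate G (H \<union> T) = carrier G"
proof (induction "order G - card H" arbitrary: H rule: less_induct)
  case less
  have Hsub: "H \<subseteq> carrier G" using less.prems subgroup.subset by blast
  show ?case
  proof (cases "H = carrier G")
    case True
    have "generate G (H \<union> {}) = carrier G"
      using generate_incl[of "carrier G"] incl[of _ "carrier G"] True by auto
    then show ?thesis using True by (intro exI[of _ "{}"]) (auto simp: order_def)
  next
    case False
    then obtain g where g: "g \<in> carrier G" "g \<notin> H" using Hsub by blast
    define H' where "H' = generate G (insert g H)"
    have H'sub: "subgroup H' G" unfolding H'_def using g Hsub by (intro generate_is_subgroup) auto
    have "H \<subseteq> H'" unfolding H'_def using incl[of _ "insert g H"] by auto
    moreover have "g \<in> H'" unfolding H'_def using incl[of g "insert g H"] by auto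
    ultimately have psub: "H \<subset> H'" using g by auto
    have dbl: "2 * card H \<le> card H'" using subgroup_double[OF fin less.prems H'sub psub] .
    have cH': "card H' \<le> order G"
      using card_mono[OF fin subgroup.subset[OF H'sub]] by (simp add: order_def)
    have "\<one> \<in> H" using subgroup.one_closed[OF less.prems] .
    moreover have "finite H" using finite_subset[OF Hsub fin] .
    ultimately have "card H > 0" using card_gt_0_iff by blast
    then have "order G - card H' < order G - card H" using dbl cH' by linarith
    from less.hyps[OF this H'sub] obtain T' where T': "T' \<subseteq> carrier G" "finite T'"
      "2 ^ card T' * card H' \<le> order G" "generate G (H' \<union> T') = carrier G" by blast
    define T where "T = insert g T'"
    have "card T \<le> Suc (card T')" unfolding T_def using T'(2) card_insert_le_m1
      by (simp add: card_insert_if)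
    then have "(2::nat) ^ card T \<le> 2 ^ Suc (card T')" by (rule power_increasing) simp
    then have "2 ^ card T * card H \<le> 2 ^ Suc (card T') * card H" by (rule mult_le_mono1)
    also have "\<dots> = 2 ^ card T' * (2 * card H)" by simp
    also have "\<dots> \<le> 2 ^ card T' * card H'" using dbl by simp
    finally have bnd: "2 ^ card T * card H \<le> order G" using T'(3) by linarith
    have HT: "H \<union> T \<subseteq> carrier G" using Hsub T'(1) g unfolding T_def by auto
    have sg: "subgroup (generate G (H \<union> T)) G" using generate_is_subgroup[OF HT] .
    have "H' \<subseteq> generate G (H \<union> T)" unfolding H'_def T_def by (rule mono_generate) auto
    moreover have "T' \<subseteq> generate G (H \<union> T)" unfolding T_def using incl[of _ "H \<union> insert g T'"] by auto
    ultimately have "generate G (H' \<union> T') \<subseteq> generate G (H \<union> T)"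
      using generate_subgroup_incl[OF _ sg] by auto
    then have "generate G (H \<union> T) = carrier G" using T'(4) generate_incl[OF HT] by auto
    then show ?thesis using bnd HT T'(2) unfolding T_def by (intro exI[of _ "insert g T'"]) auto
  qed
qed

lemma auto_card:
  assumes fin: "finite (carrier G)"
  shows "\<exists>k. 2^k \<le> order G \<and> card (auto G) \<le> order G ^ k"
proof -
  obtain T where T: "T \<subseteq> carrier G" "finite T" "2 ^ card T * card {\<one>} \<le> order G"
    "generate G ({\<one>} \<union> T) = carrier G"
    using gen_exists[OF fin triv_subgroup] by blast
  have inj: "inj_on (\<lambda>\<phi>. restrict \<phi> T) (auto G)"
  proof (rule inj_onI)
    fix f g assume f: "f \<in> auto G" and g: "g \<in> auto G" and eq: "restrict f T = restrict g T"
    have fh: "f \<in> hom G G" and gh: "g \<in> hom G G" using f g by (auto simp: auto_def)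
    interpret f: group_hom G G f using hom_group_hom[OF fh] .
    interpret g: group_hom G G g using hom_group_hom[OF gh] .
    have sg: "subgroup {x \<in> carrier G. f x = g x} G" using equalizer_subgroup[OF fh gh] .
    have "f x = g x" if "x \<in> T" for x
    proof -
      have "restrict f T x = restrict g T x" using eq by simp
      then show ?thesis using that by simp
    qed
    then have "{\<one>} \<union> T \<subseteq> {x \<in> carrier G. f x = g x}"
      using T(1) f.hom_one g.hom_one by auto
    from generate_subgroup_incl[OF this sg] T(4) have all: "\<And>x. x \<in> carrier G \<Longrightarrow> f x = g x" by auto
    have "f \<in> extensional (carrier G)" "g \<in> extensional (carrier G)" using f g by (auto simp: auto_def Bij_def)
    then show "f = g" using all extensionalityI by blast
  qed
  have img: "(\<lambda>\<phi>. restrict \<phi> T) ` auto G \<subseteq> PiE T (\<lambda>_. carrier G)"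
  proof
    fix y assume "y \<in> (\<lambda>\<phi>. restrict \<phi> T) ` auto G"
    then obtain f where f: "f \<in> auto G" "y = restrict f T" by blast
    have "bij_betw f (carrier G) (carrier G)" using f by (auto simp: auto_def Bij_def)
    then have "\<forall>x\<in>carrier G. f x \<in> carrier G" by (auto simp: bij_betw_def)
    then show "y \<in> PiE T (\<lambda>_. carrier G)" using f T(1) by auto
  qed
  have "card (auto G) \<le> card (PiE T (\<lambda>_. carrier G))"
    using card_inj_on_le[OF inj img] fin T(2) by (simp add: finite_PiE)
  also have "\<dots> = order G ^ card T" using T(2) by (simp add: card_PiE order_def)
  finally show ?thesis using T(3) by auto
qed

lemma auto_finite:
  assumes fin: "finite (carrier G)"
  shows "finite (auto G)"
proof -
  have "auto G \<subseteq> PiE (carrier G) (\<lambda>_. carrier G)"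
  proof
    fix f assume f: "f \<in> auto G"
    have "bij_betw f (carrier G) (carrier G)" "f \<in> extensional (carrier G)"
      using f by (auto simp: auto_def Bij_def)
    then show "f \<in> PiE (carrier G) (\<lambda>_. carrier G)" by (auto simp: bij_betw_def PiE_iff)
  qed
  then show ?thesis using finite_subset fin by (blast intro: finite_PiE)
qed

lemma inv_count:
  assumes fin: "finite (carrier G)" and phi: "\<phi> \<in> auto G" and ne: "\<phi> \<noteq> (\<lambda>x\<in>carrier G. x)"
  shows "\<exists>m. 4 * m \<le> 3 * order G \<and> card {S. S \<subseteq> carrier G \<and> \<phi> ` S = S} \<le> 2 ^ m"
proof -
  have ph: "\<phi> \<in> hom G G" and bij: "bij_betw \<phi> (carrier G) (carrier G)"
    and ext: "\<phi> \<in> extensional (carrier G)" using phi by (auto simp: auto_def Bij_def)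
  have inj: "inj_on \<phi> (carrier G)" using bij bij_betw_def by blast
  have maps: "\<And>x. x \<in> carrier G \<Longrightarrow> \<phi> x \<in> carrier G" using bij bij_betwE by blast
  define F where "F = {x \<in> carrier G. \<phi> x = x}"
  have Fsg: "subgroup F G" unfolding F_def using fixed_subgroup[OF ph] .
  have "F \<noteq> carrier G"
  proof
    assume "F = carrier G"
    then have "\<And>x. x \<in> carrier G \<Longrightarrow> \<phi> x = (\<lambda>x\<in>carrier G. x) x" unfolding F_def by auto
    then have "\<phi> = (\<lambda>x\<in>carrier G. x)" using ext by (intro extensionalityI) auto
    then show False using ne by simp
  qed
  then have "F \<subset> carrier G" unfolding F_def by auto
  then have F2: "2 * card F \<le> order G"
    using subgroup_double[OF fin Fsg subgroup_self] by (simp add: order_def)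
  define N where "N = carrier G - F"
  have Nmaps: "\<And>x. x \<in> N \<Longrightarrow> \<phi> x \<in> N"
  proof -
    fix x assume x: "x \<in> N"
    then have xc: "x \<in> carrier G" and nx: "\<phi> x \<noteq> x" unfolding N_def F_def by auto
    have "\<phi> (\<phi> x) \<noteq> \<phi> x" using inj_onD[OF inj _ maps[OF xc] xc] nx by blast
    then show "\<phi> x \<in> N" unfolding N_def F_def using maps[OF xc] by auto
  qed
  have finN: "finite N" unfolding N_def using fin by simp
  define Fam where "Fam = {D. D \<subseteq> N \<and> D \<inter> \<phi> ` D = {}}"
  have finFam: "finite Fam" unfolding Fam_def using finN by (rule rev_finite_subset[OF finite_Pow_iff[THEN iffD2]]) auto
  have "{} \<in> Fam" unfolding Fam_def by auto
  define mx where "mx = Max (card ` Fam)"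
  have "mx \<in> card ` Fam" unfolding mx_def using finFam \<open>{} \<in> Fam\<close> by (intro Max_in) auto
  then obtain D where D: "D \<in> Fam" "card D = mx" by blast
  have Dmax: "\<And>D'. D' \<in> Fam \<Longrightarrow> card D' \<le> card D" using D(2) finFam unfolding mx_def by auto
  have DN: "D \<subseteq> N" and Ddisj: "D \<inter> \<phi> ` D = {}" using D(1) unfolding Fam_def by auto
  have finD: "finite D" using finite_subset[OF DN finN] .
  have cover: "x \<in> D \<or> x \<in> \<phi> ` D \<or> \<phi> x \<in> D" if x: "x \<in> N" for x
  proof (rule ccontr)
    assume "\<not> ?thesis"
    then have a: "x \<notin> D" "x \<notin> \<phi> ` D" "\<phi> x \<notin> D" by auto
    have nx: "\<phi> x \<noteq> x" using x unfolding N_def F_def by auto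
    have "insert x D \<in> Fam" unfolding Fam_def using a nx x DN Ddisj by auto
    then have "card (insert x D) \<le> card D" by (rule Dmax)
    then show False using a(1) finD by simp
  qed
  have "\<phi> ` D \<subseteq> N" using Nmaps DN by auto
  moreover have "card (\<phi> ` D) = card D"
    using card_image[OF inj_on_subset[OF inj]] DN unfolding N_def by auto
  ultimately have "card D + card D \<le> card N"
    using card_Un_disjoint[OF finD, of "\<phi> ` D"] finD Ddisj DN card_mono[OF finN, of "D \<union> \<phi> ` D"]
    by auto
  moreover have "card N = order G - card F" unfolding N_def order_def F_def
    using fin by (simp add: card_Diff_subset finite_subset)
  ultimately have D2: "2 * card D \<le> order G - card F" by simp
  define R where "R = F \<union> D"
  have "card R \<le> card F + card D" unfolding R_def by (rule card_Un_le)
  then have R4: "4 * card R \<le> 3 * order G" using D2 F2 by linarith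
  have key: "\<phi> y \<in> S \<longleftrightarrow> y \<in> S" if S: "S \<subseteq> carrier G" "\<phi> ` S = S" and y: "y \<in> carrier G" for S y
  proof
    assume "\<phi> y \<in> S"
    then have "\<phi> y \<in> \<phi> ` S" using S by simp
    then obtain z where z: "z \<in> S" "\<phi> y = \<phi> z" by blast
    then have "y = z" using inj_onD[OF inj z(2) y] S by auto
    then show "y \<in> S" using z by simp
  next
    assume "y \<in> S" then show "\<phi> y \<in> S" using S by blast
  qed
  have injR: "inj_on (\<lambda>S. S \<inter> R) {S. S \<subseteq> carrier G \<and> \<phi> ` S = S}"
  proof (rule inj_onI)
    fix S1 S2 assume S1: "S1 \<in> {S. S \<subseteq> carrier G \<and> \<phi> ` S = S}" and S2: "S2 \<in> {S. S \<subseteq> carrier G \<and> \<phi> ` S = S}"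
      and eq: "S1 \<inter> R = S2 \<inter> R"
    have iff: "x \<in> S1 \<longleftrightarrow> x \<in> S2" if x: "x \<in> carrier G" for x
    proof (cases "x \<in> R")
      case True then show ?thesis using eq by blast
    next
      case False
      then have xN: "x \<in> N" using x unfolding R_def N_def by auto
      have "x \<in> \<phi> ` D \<or> \<phi> x \<in> D" using cover[OF xN] False unfolding R_def by auto
      then show ?thesis
      proof
        assume "x \<in> \<phi> ` D"
        then obtain d where d: "d \<in> D" "x = \<phi> d" by blast
        have dc: "d \<in> carrier G" using d DN unfolding N_def by auto
        have "d \<in> S1 \<longleftrightarrow> d \<in> S2" using eq d(1) unfolding R_def by blast
        then show ?thesis using key[of S1 d] key[of S2 d] S1 S2 dc d(2) by auto
      next
        assume pd: "\<phi> x \<in> D"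
        have "\<phi> x \<in> S1 \<longleftrightarrow> \<phi> x \<in> S2" using eq pd unfolding R_def by blast
        then show ?thesis using key[of S1 x] key[of S2 x] S1 S2 x by auto
      qed
    qed
    show "S1 = S2" using iff S1 S2 by blast
  qed
  have finR: "finite R" unfolding R_def F_def using finD fin by auto
  have "card {S. S \<subseteq> carrier G \<and> \<phi> ` S = S} \<le> card (Pow R)"
    using card_inj_on_le[OF injR] finR by auto
  also have "\<dots> = 2 ^ card R" using finR by (simp add: card_Pow)
  finally show ?thesis using R4 by blast
qed

end

lemma powr_bound_aux:
  fixes n k :: nat
  assumes "2 ^ k \<le> n"
  shows "real n ^ k \<le> 2 powr ((log 2 (real n))\<^sup>2)"
proof -
  have "0 < (2::nat) ^ k" by simp
  then have n0: "n > 0" using assms by linarith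
  have "(2::real) ^ k \<le> real n" using assms by (metis of_nat_le_iff of_nat_numeral of_nat_power)
  then have "2 powr real k \<le> real n" by (simp add: powr_realpow)
  then have k: "real k \<le> log 2 (real n)" using n0 by (simp add: le_log_iff)
  have l0: "0 \<le> log 2 (real n)" using n0 by simp
  have "real n ^ k = (2 powr log 2 (real n)) ^ k" using n0 by simp
  also have "\<dots> = (2 powr log 2 (real n)) powr real k" by (simp add: powr_realpow)
  also have "\<dots> = 2 powr (real k * log 2 (real n))" by (simp add: powr_powr mult.commute)
  also have "\<dots> \<le> 2 powr ((log 2 (real n))\<^sup>2)"
    using mult_right_mono[OF k l0] by (simp add: power2_eq_square)
  finally show ?thesis .
qed

theorem lemma5p2:
  fixes G :: "('a, 'b) monoid_scheme"
  assumes "group G"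
    and "finite (carrier G)"
    and "order G \<ge> 2"
  shows "real (card {S. S \<subseteq> carrier G \<and>
            (\<exists>\<phi> \<in> auto G. \<phi> \<noteq> (\<lambda>x \<in> carrier G. x) \<and> \<phi> ` S = S)})
         \<le> 2 powr (3 * real (order G) / 4 + (log 2 (real (order G)))\<^sup>2)"
proof -
  interpret group G by fact
  define n where "n = order G"
  define A where "A = {\<phi> \<in> auto G. \<phi> \<noteq> (\<lambda>x \<in> carrier G. x)}"
  define Inv where "Inv \<phi> = {S. S \<subseteq> carrier G \<and> \<phi> ` S = S}" for \<phi>
  have finA: "finite A" unfolding A_def using auto_finite[OF assms(2)] by simp
  have eqU: "{S. S \<subseteq> carrier G \<and> (\<exists>\<phi> \<in> auto G. \<phi> \<noteq> (\<lambda>x \<in> carrier G. x) \<and> \<phi> ` S = S)}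
     = (\<Union>\<phi>\<in>A. Inv \<phi>)" unfolding A_def Inv_def by auto
  have each: "real (card (Inv \<phi>)) \<le> 2 powr (3 * real n / 4)" if phiA: "\<phi> \<in> A" for \<phi>
  proof -
    obtain m where m: "4 * m \<le> 3 * order G" "card (Inv \<phi>) \<le> 2 ^ m"
      using inv_count[OF assms(2), of \<phi>] phiA unfolding A_def Inv_def by auto
    have "real (card (Inv \<phi>)) \<le> 2 ^ m" using m(2)
      by (metis of_nat_le_iff of_nat_numeral of_nat_power)
    also have "\<dots> = 2 powr real m" by (simp add: powr_realpow)
    also have "\<dots> \<le> 2 powr (3 * real n / 4)"
    proof -
      have "4 * real m \<le> 3 * real n" using m(1) unfolding n_def by (metis of_nat_le_iff of_nat_mult of_nat_numeral)
      then have "real m \<le> 3 * real n / 4" by simp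
      then show ?thesis by simp
    qed
    finally show ?thesis .
  qed
  obtain k where k: "2 ^ k \<le> n" "card (auto G) \<le> n ^ k" using auto_card[OF assms(2)] unfolding n_def by blast
  have cA: "real (card A) \<le> 2 powr ((log 2 (real n))\<^sup>2)"
  proof -
    have "card A \<le> card (auto G)" unfolding A_def using auto_finite[OF assms(2)] by (intro card_mono) auto
    then have "card A \<le> n ^ k" using k(2) by linarith
    then have "real (card A) \<le> real n ^ k" by (metis of_nat_le_iff of_nat_power)
    also have "\<dots> \<le> 2 powr ((log 2 (real n))\<^sup>2)" using powr_bound_aux[OF k(1)] .
    finally show ?thesis .
  qed
  have "real (card (\<Union>\<phi>\<in>A. Inv \<phi>)) \<le> real (\<Sum>\<phi>\<in>A. card (Inv \<phi>))"
    using card_UN_le[OF finA, of Inv] by linarith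
  also have "\<dots> = (\<Sum>\<phi>\<in>A. real (card (Inv \<phi>)))" by simp
  also have "\<dots> \<le> (\<Sum>\<phi>\<in>A. 2 powr (3 * real n / 4))" using each by (intro sum_mono) auto
  also have "\<dots> = real (card A) * 2 powr (3 * real n / 4)" by simp
  also have "\<dots> \<le> 2 powr ((log 2 (real n))\<^sup>2) * 2 powr (3 * real n / 4)"
    using cA by (intro mult_right_mono) auto
  also have "\<dots> = 2 powr (3 * real n / 4 + (log 2 (real n))\<^sup>2)"
    by (simp add: powr_add[symmetric] add.commute)
  finally show ?thesis unfolding eqU n_def .
qed

end
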